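(* Let $\alpha,\beta,\gamma\in\mathbb{C}$ with $\mathrm{Re}\,\beta>-1$, such that all gamma functions and hypergeometric functions below are well-defined, and let $\rho\in\mathbb{R}\setminus\{0\}$. For $\delta\in\mathbb{C}$ and $z\neq0$ let $$f(\alpha,\beta,\gamma,\delta;z)=\sum_{\nu=0}^{\infty}\frac{z^{-\nu}\Gamma(\alpha+\gamma+\nu)}{\nu!\,\Gamma(\beta+\nu)}\,E\left(\begin{matrix}\alpha+1,&\beta+\nu\\ \delta,&\beta+1+\nu\end{matrix};z\right).$$ Then $$\int_0^{\rho}t^{\beta}E(\alpha;\beta;i/t)E(\alpha+\gamma;\beta;-i/t)\,dt=\rho^{\beta+1}E(\alpha;\beta;i/\rho)E\left(\begin{matrix}\alpha+\gamma,&\beta+1\\ \beta,&\beta+2\end{matrix};-\frac{i}{\rho}\right)-i\rho^{\beta+2}\beta f\left(\alpha,\beta+2,\gamma,\beta+1;\frac{i}{\rho}\right)-\rho^{\beta+3}f\left(\alpha,\beta+3,\gamma+1,\beta+1;\frac{i}{\rho}\right),$$ and equivalently $$\int_0^{\rho}t^{\beta}E(\alpha;\beta;i/t)E(\alpha+\gamma;\beta;-i/t)\,dt=\rho^{\beta+1}\left(\beta f\left(\alpha-1,\beta+1,\gamma+1,\beta;\frac{i}{\rho}\right)-i\rho f\left(\alpha-1,\beta+2,\gamma+2,\beta;\frac{i}{\rho}\right)\right).$$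
   Context: For complex parameters $a_1,\dots,a_p$, $b_1,\dots,b_q$ with $p\le q$ and $z\in\mathbb{C}\setminus\{0\}$, the MacRobert $E$-function is $$E\left(\begin{matrix}a_1,\dots,a_p\\ b_1,\dots,b_q\end{matrix};z\right)=\frac{\prod_{j=1}^p\Gamma(a_j)}{\prod_{j=1}^q\Gamma(b_j)}\,{}_pF_q\left(\begin{matrix}a_1,\dots,a_p\\ b_1,\dots,b_q\end{matrix};-\frac1z\right),$$ where ${}_pF_q$ is the generalized hypergeometric function. In particular $E(a;b;z)=\frac{\Gamma(a)}{\Gamma(b)}\,{}_1F_1(a;b;-1/z)$. *)

theory Defs
  imports "HOL-Analysis.Analysis"
begin

definition hyperpFq :: "complex list \<Rightarrow> complex list \<Rightarrow> complex \<Rightarrow> complex" where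
  "hyperpFq as bs z =
     (\<Sum>n. (\<Prod>a\<leftarrow>as. pochhammer a n) / (\<Prod>b\<leftarrow>bs. pochhammer b n) * z ^ n / fact n)"

text \<open>MacRobert E-function (for p \<le> q).\<close>
definition MacRobertE :: "complex list \<Rightarrow> complex list \<Rightarrow> complex \<Rightarrow> complex" where
  "MacRobertE as bs z =
     (\<Prod>a\<leftarrow>as. Gamma a) / (\<Prod>b\<leftarrow>bs. Gamma b) * hyperpFq as bs (- 1 / z)"

definition fE :: "complex \<Rightarrow> complex \<Rightarrow> complex \<Rightarrow> complex \<Rightarrow> complex \<Rightarrow> complex" where
  "fE a b c d z =
     (\<Sum>\<nu>. (1 / z) ^ \<nu> * Gamma (a + c + of_nat \<nu>) / (fact \<nu> * Gamma (b + of_nat \<nu>))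
           * MacRobertE [a + 1, b + of_nat \<nu>] [d, b + 1 + of_nat \<nu>] z)"

definition has_ointegral :: "(real \<Rightarrow> complex) \<Rightarrow> complex \<Rightarrow> real \<Rightarrow> real \<Rightarrow> bool" where
  "has_ointegral f I a b =
     (if a \<le> b then (f has_integral I) {a..b} else (f has_integral (- I)) {b..a})"

end

theory Submission
  imports Defs
begin


definition ps :: "(nat \<Rightarrow> complex) \<Rightarrow> complex \<Rightarrow> complex" where
  "ps c z = (\<Sum>n. c n * z^n)"
definition entire :: "(nat \<Rightarrow> complex) \<Rightarrow> bool" where
  "entire c \<longleftrightarrow> (\<forall>z. summable (\<lambda>n. c n * z^n))"
definition sc :: "complex \<Rightarrow> (nat \<Rightarrow> complex) \<Rightarrow> nat \<Rightarrow> complex" where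
  "sc s c n = c n / (s + of_nat n)"
definition Fn :: "complex \<Rightarrow> (nat \<Rightarrow> complex) \<Rightarrow> real \<Rightarrow> complex" where
  "Fn s c t = complex_of_real t powr s * ps (sc s c) (complex_of_real t)"
definition cauchy :: "(nat \<Rightarrow> complex) \<Rightarrow> (nat \<Rightarrow> complex) \<Rightarrow> nat \<Rightarrow> complex" where
  "cauchy p q n = (\<Sum>i\<le>n. p i * q (n - i))"
definition cg :: "complex \<Rightarrow> complex \<Rightarrow> complex \<Rightarrow> nat \<Rightarrow> complex" where
  "cg a b u n = Gamma (a + of_nat n) / Gamma (b + of_nat n) * u ^ n / fact n"

lemma entire_abs:
  assumes "entire c" shows "summable (\<lambda>n. norm (c n * z^n))"
proof -
  have "summable (\<lambda>n. c n * (complex_of_real (norm z + 1))^n)"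
    using assms by (simp add: entire_def)
  then show ?thesis by (rule powser_insidea) simp
qed

lemma entire_summable: "entire c \<Longrightarrow> summable (\<lambda>n. c n * z^n)"
  by (simp add: entire_def)

lemma norm_s_plus_n:
  assumes "Re s > 0" shows "norm (s + of_nat n) \<ge> Re s"
proof -
  have "Re s \<le> Re (s + of_nat n)" by simp
  also have "\<dots> \<le> norm (s + of_nat n)" by (rule complex_Re_le_cmod)
  finally show ?thesis .
qed

lemma s_plus_n_nz: "Re s > 0 \<Longrightarrow> s + of_nat n \<noteq> 0"
  using norm_s_plus_n[of s n] by auto

lemma entire_sc:
  assumes "entire c" "Re s > 0" shows "entire (sc s c)"
  unfolding entire_def
proof
  fix z
  have S: "summable (\<lambda>n. norm (c n * z^n) / Re s)"
    using entire_abs[OF assms(1)] by (intro summable_divide)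
  have L: "norm (sc s c n * z^n) \<le> norm (c n * z^n) / Re s" for n
  proof -
    have "norm (sc s c n * z^n) = norm (c n * z^n) / norm (s + of_nat n)"
      by (simp add: sc_def norm_mult norm_divide)
    also have "\<dots> \<le> norm (c n * z^n) / Re s"
      using norm_s_plus_n[OF assms(2), of n] assms(2)
      by (intro divide_left_mono mult_pos_pos) (auto intro: order.strict_trans2)
    finally show ?thesis .
  qed
  have "summable (\<lambda>n. norm (sc s c n * z^n))"
    by (rule summable_comparison_test'[where N=0, OF S]) (simp add: L)
  then show "summable (\<lambda>n. sc s c n * z^n)" by (rule summable_norm_cancel)
qed

lemma cauchy_term:
  "cauchy p q n * z^n = (\<Sum>i\<le>n. (p i * z^i) * (q (n - i) * z^(n-i)))"
  unfolding cauchy_def sum_distrib_right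
  by (intro sum.cong refl) (simp add: power_add[symmetric] algebra_simps)

lemma entire_cauchy:
  assumes "entire p" "entire q"
  shows "entire (cauchy p q)" and "ps (cauchy p q) z = ps p z * ps q z"
proof -
  show "entire (cauchy p q)" unfolding entire_def
  proof
    fix z
    show "summable (\<lambda>n. cauchy p q n * z^n)"
      unfolding cauchy_term
      by (rule summable_Cauchy_product) (use entire_abs assms in auto)
  qed
  show "ps (cauchy p q) z = ps p z * ps q z"
    unfolding ps_def cauchy_term
    by (rule Cauchy_product[symmetric]) (use entire_abs assms in auto)
qed

lemma entire_diffs: "entire c \<Longrightarrow> entire (diffs c)"
  unfolding entire_def by (auto intro: termdiff_converges_all)

lemma ps_deriv: "entire c \<Longrightarrow> (ps c has_field_derivative ps (diffs c) z) (at z)"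
  unfolding ps_def entire_def by (rule termdiffs_strong_converges_everywhere) auto

lemma ps_isCont: "entire c \<Longrightarrow> isCont (ps c) z"
  using ps_deriv DERIV_isCont by blast


lemma nonpos_add_nat: "a \<notin> \<int>\<^sub>\<le>\<^sub>0 \<Longrightarrow> a + of_nat n \<notin> (\<int>\<^sub>\<le>\<^sub>0 :: complex set)"
proof
  assume a: "a \<notin> \<int>\<^sub>\<le>\<^sub>0" and "a + of_nat n \<in> \<int>\<^sub>\<le>\<^sub>0"
  then obtain m where "a + of_nat n = - of_nat m" by (auto elim!: nonpos_Ints_cases')
  then have "a = - of_nat (m + n)" by (simp add: algebra_simps)
  then have "a \<in> \<int>\<^sub>\<le>\<^sub>0" by (simp only: minus_of_nat_in_nonpos_Ints)
  then show False using a by simp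
qed

lemma entire_ratio:
  assumes rec: "\<And>n. c (Suc n) = c n * (u * (a + of_nat n) / ((b + of_nat n) * of_nat (Suc n)))"
  shows "entire c"
  unfolding entire_def
proof
  fix z :: complex
  define K where "K = norm z * norm u"
  define N where "N = nat \<lceil>2 * norm b + 4 * K * (norm a + 1)\<rceil> + 1"
  have K0: "K \<ge> 0" by (simp add: K_def)
  show "summable (\<lambda>n. c n * z ^ n)"
  proof (rule summable_ratio_test[where c="1/2" and N=N])
    fix n assume nN: "n \<ge> N"
    have n1: "real n \<ge> 1" using nN by (simp add: N_def)
    have nbig: "real n \<ge> 2 * norm b + 4 * K * (norm a + 1)"
      using nN unfolding N_def by linarith
    have "norm (of_nat n :: complex) \<le> norm (b + of_nat n) + norm b"
      using norm_triangle_ineq4[of "b + of_nat n" b] by simp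
    then have nb: "norm (b + of_nat n) \<ge> real n / 2" using nbig K0
      by (simp add: mult_nonneg_nonneg) (smt (verit) mult_nonneg_nonneg norm_ge_zero)
    have na: "norm (a + of_nat n) \<le> norm a + real n"
      using norm_triangle_ineq[of a "of_nat n"] by simp
    have st1: "norm a + real n \<le> (norm a + 1) * real n"
      using mult_left_mono[OF n1, of "norm a"] by (simp add: algebra_simps)
    have st2: "4 * K * (norm a + 1) * real n \<le> real n * real n"
      using nbig n1 K0 by (intro mult_right_mono; smt (verit) norm_ge_zero mult_nonneg_nonneg)
    have "K * norm (a + of_nat n) \<le> K * ((norm a + 1) * real n)"
      using na st1 K0 by (intro mult_left_mono) auto
    with st2 have key: "4 * (K * norm (a + of_nat n)) \<le> real n * (real n + 1)"
      using n1 by (simp add: algebra_simps)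
    have pos: "norm (b + of_nat n) * (real n + 1) > 0" using nb n1 by (intro mult_pos_pos) auto
    have "K * norm (a + of_nat n) / (norm (b + of_nat n) * (real n + 1)) \<le> 1/2"
    proof -
      have h: "real n * (real n + 1) \<le> (2 * norm (b + of_nat n)) * (real n + 1)"
        using nb n1 by (intro mult_right_mono) auto
      then have "K * norm (a + of_nat n) \<le> 1/2 * (norm (b + of_nat n) * (real n + 1))"
      proof -
        have h': "real n * (real n + 1) \<le> 2 * (norm (b + of_nat n) * (real n + 1))"
          using h by (simp only: mult.assoc)
        show ?thesis using h' key by linarith
      qed
      then show ?thesis using pos by (simp add: divide_le_eq)
    qed
    then have r: "norm z * norm (u * (a + of_nat n) / ((b + of_nat n) * of_nat (Suc n))) \<le> 1/2"
    proof -
      have ns: "norm (of_nat (Suc n) :: complex) = real n + 1" by (simp only: norm_of_nat)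
      show ?thesis using \<open>K * norm (a + of_nat n) / (norm (b + of_nat n) * (real n + 1)) \<le> 1/2\<close>
        by (simp only: norm_mult norm_divide ns K_def) (simp add: ac_simps)
    qed
    have "norm (c (Suc n) * z ^ Suc n) = norm (c n * z^n) * (norm z * norm (u * (a + of_nat n) / ((b + of_nat n) * of_nat (Suc n))))"
    proof -
      have "c (Suc n) * z ^ Suc n = (c n * z^n) * (z * (u * (a + of_nat n) / ((b + of_nat n) * of_nat (Suc n))))"
        by (simp only: rec power_Suc) (simp only: ac_simps)
      then show ?thesis by (simp only: norm_mult)
    qed
    also have "\<dots> \<le> norm (c n * z^n) * (1/2)"
      by (intro mult_left_mono r) auto
    finally show "norm (c (Suc n) * z ^ Suc n) \<le> 1 / 2 * norm (c n * z ^ n)" by simp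
  qed simp
qed

lemma cg_Suc:
  assumes "a \<notin> \<int>\<^sub>\<le>\<^sub>0" "b \<notin> \<int>\<^sub>\<le>\<^sub>0"
  shows "cg a b u (Suc n) = cg a b u n * (u * (a + of_nat n) / ((b + of_nat n) * of_nat (Suc n)))"
proof -
  have an: "a + of_nat n \<notin> \<int>\<^sub>\<le>\<^sub>0" and bn: "b + of_nat n \<notin> \<int>\<^sub>\<le>\<^sub>0"
    using assms nonpos_add_nat by auto
  have ga: "Gamma (a + of_nat (Suc n)) = (a + of_nat n) * Gamma (a + of_nat n)"
    using Gamma_plus1[OF an] by (simp add: add_ac)
  have gb: "Gamma (b + of_nat (Suc n)) = (b + of_nat n) * Gamma (b + of_nat n)"
    using Gamma_plus1[OF bn] by (simp add: add_ac)
  have bnz: "b + of_nat n \<noteq> 0" using bn by auto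
  have gbz: "Gamma (b + of_nat n) \<noteq> 0" using bn by (simp add: Gamma_eq_zero_iff)
  show ?thesis unfolding cg_def ga gb using bnz gbz
    by (simp add: field_simps)
qed

lemma entire_cg: "a \<notin> \<int>\<^sub>\<le>\<^sub>0 \<Longrightarrow> b \<notin> \<int>\<^sub>\<le>\<^sub>0 \<Longrightarrow> entire (cg a b u)"
  by (rule entire_ratio[OF cg_Suc])

lemma m1_powr: "(-1::complex) powr (s - 1) = - ((-1) powr s)"
  by (simp add: powr_def exp_diff algebra_simps)

lemma neg_real_powr:
  assumes "x < 0" shows "complex_of_real x powr s = (-1) powr s * complex_of_real (-x) powr s"
  using powr_neg_real_complex[of "-x" s] assms by simp

lemma powr_real_deriv:
  assumes "t \<noteq> 0"
  shows "((\<lambda>t. complex_of_real t powr s) has_vector_derivative (s * complex_of_real t powr (s - 1))) (at t)"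
proof (cases "t > 0")
  case True
  have "((\<lambda>z. z powr s) has_field_derivative (s * complex_of_real t powr (s - 1))) (at (complex_of_real t))"
    by (rule has_field_derivative_powr) (use True in simp)
  then show ?thesis by (rule has_vector_derivative_real_field)
next
  case False
  then have tn: "t < 0" using assms by simp
  have d1: "((\<lambda>z. z powr s) has_field_derivative (s * (- complex_of_real t) powr (s - 1))) (at (- complex_of_real t))"
    by (rule has_field_derivative_powr) (use tn in \<open>simp add: complex_nonpos_Reals_iff\<close>)
  have d2: "((\<lambda>z. (- z) powr s) has_field_derivative (s * (- complex_of_real t) powr (s - 1)) * (-1)) (at (complex_of_real t))"
    using DERIV_chain2[where f="\<lambda>z. z powr s" and g=uminus and x="complex_of_real t", OF d1 DERIV_minus[OF DERIV_ident]]
    by simp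
  have d3: "((\<lambda>z. (-1) powr s * (- z) powr s) has_field_derivative (-1) powr s * ((s * (- complex_of_real t) powr (s - 1)) * (-1))) (at (complex_of_real t))"
    by (rule DERIV_cmult[OF d2])
  have d4: "((\<lambda>x. (-1) powr s * (- complex_of_real x) powr s) has_vector_derivative (-1) powr s * ((s * (- complex_of_real t) powr (s - 1)) * (-1))) (at t)"
    by (rule has_vector_derivative_real_field[OF d3])
  have eqv: "(-1) powr s * ((s * (- complex_of_real t) powr (s - 1)) * (-1)) = s * complex_of_real t powr (s - 1)"
    using neg_real_powr[OF tn, of "s - 1"] m1_powr[of s] by simp
  show ?thesis
    apply (rule has_vector_derivative_transform_within_open[where S="{..<0}"])
    using d4 eqv tn by (auto simp: neg_real_powr)
qed

lemma ps_shift: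
  assumes "entire d"
  shows "z * ps (diffs d) z = ps (\<lambda>n. of_nat n * d n) z"
proof -
  have "(\<lambda>n. diffs d n * z^n) sums ps (diffs d) z"
    unfolding ps_def using entire_diffs[OF assms] by (simp add: entire_def summable_sums)
  then have "(\<lambda>n. z * (diffs d n * z^n)) sums (z * ps (diffs d) z)"
    by (rule sums_mult)
  then have "(\<lambda>n. (\<lambda>n. of_nat n * d n * z^n) (Suc n)) sums (z * ps (diffs d) z)"
    by (simp add: diffs_def algebra_simps)
  then have "(\<lambda>n. of_nat n * d n * z^n) sums (z * ps (diffs d) z)"
    by (subst (asm) sums_Suc_iff) simp
  then show ?thesis unfolding ps_def by (simp add: sums_iff)
qed

lemma ode_identity:
  assumes "entire c" "Re s > 0"
  shows "z * ps (diffs (sc s c)) z + s * ps (sc s c) z = ps c z"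
proof -
  have e: "entire (sc s c)" by (rule entire_sc[OF assms])
  have A: "(\<lambda>n. of_nat n * sc s c n * z^n) sums (z * ps (diffs (sc s c)) z)"
  proof -
    have "summable (\<lambda>n. of_nat n * sc s c n * z^n)"
    proof -
      have "summable (\<lambda>n. diffs (sc s c) n * z^n)" using entire_diffs[OF e] by (simp add: entire_def)
      then have "summable (\<lambda>n. z * (diffs (sc s c) n * z^n))" by (rule summable_mult)
      then have "summable (\<lambda>n. (\<lambda>n. of_nat n * sc s c n * z^n) (Suc n))"
        by (simp add: diffs_def algebra_simps)
      then show ?thesis by (subst (asm) summable_Suc_iff)
    qed
    then show ?thesis using ps_shift[OF e, of z] by (simp add: ps_def summable_sums)
  qed
  have B: "(\<lambda>n. s * (sc s c n * z^n)) sums (s * ps (sc s c) z)"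
    using e unfolding ps_def by (intro sums_mult) (simp add: entire_def summable_sums)
  have "(\<lambda>n. of_nat n * sc s c n * z^n + s * (sc s c n * z^n)) sums (z * ps (diffs (sc s c)) z + s * ps (sc s c) z)"
    by (rule sums_add[OF A B])
  moreover have "(\<lambda>n. of_nat n * sc s c n * z^n + s * (sc s c n * z^n)) = (\<lambda>n. c n * z^n)"
  proof
    fix n
    have nz: "s + of_nat n \<noteq> 0" using s_plus_n_nz[OF assms(2)] .
    have "of_nat n * sc s c n * z^n + s * (sc s c n * z^n) = ((s + of_nat n) * sc s c n) * z^n"
      by (simp add: algebra_simps)
    also have "(s + of_nat n) * sc s c n = c n" using nz by (simp add: sc_def)
    finally show "of_nat n * sc s c n * z^n + s * (sc s c n * z^n) = c n * z^n" .
  qed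
  ultimately show ?thesis unfolding ps_def by (simp add: sums_iff)
qed

lemma Fn_deriv:
  assumes "entire c" "Re s > 0" "t \<noteq> 0"
  shows "(Fn s c has_vector_derivative (complex_of_real t powr (s - 1) * ps c (complex_of_real t))) (at t)"
proof -
  have e: "entire (sc s c)" by (rule entire_sc[OF assms(1,2)])
  have d1: "((\<lambda>x. ps (sc s c) (complex_of_real x)) has_vector_derivative ps (diffs (sc s c)) (complex_of_real t)) (at t)"
    by (rule has_vector_derivative_real_field[OF ps_deriv[OF e]])
  have d: "(Fn s c has_vector_derivative
      (complex_of_real t powr s * ps (diffs (sc s c)) (complex_of_real t) + s * complex_of_real t powr (s - 1) * ps (sc s c) (complex_of_real t))) (at t)"
    unfolding Fn_def by (rule has_vector_derivative_mult[OF powr_real_deriv[OF assms(3)] d1])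
  have zt: "complex_of_real t \<noteq> 0" using assms(3) by simp
  have pw: "complex_of_real t powr s = complex_of_real t powr (s - 1) * complex_of_real t"
    using powr_add[of "complex_of_real t" "s - 1" 1] by simp
  have "complex_of_real t powr s * ps (diffs (sc s c)) (complex_of_real t) + s * complex_of_real t powr (s - 1) * ps (sc s c) (complex_of_real t)
      = complex_of_real t powr (s - 1) * (complex_of_real t * ps (diffs (sc s c)) (complex_of_real t) + s * ps (sc s c) (complex_of_real t))"
    unfolding pw by (simp add: algebra_simps)
  also have "\<dots> = complex_of_real t powr (s - 1) * ps c (complex_of_real t)"
    by (simp add: ode_identity[OF assms(1,2)])
  finally show ?thesis using d by simp
qed

lemma Fn_0: "Fn s c 0 = 0"
  by (simp add: Fn_def)

lemma Fn_lim:
  assumes "entire c" "Re s > 0"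
  shows "(Fn s c \<longlongrightarrow> 0) (at 0)"
proof -
  have e: "entire (sc s c)" by (rule entire_sc[OF assms])
  have l1: "((\<lambda>t. complex_of_real t powr s) \<longlongrightarrow> 0 powr s) (at (0::real))"
    by (rule tendsto_powr_complex') (use assms(2) in \<open>auto intro!: tendsto_eq_intros\<close>)
  have l2: "((\<lambda>t. ps (sc s c) (complex_of_real t)) \<longlongrightarrow> ps (sc s c) (complex_of_real 0)) (at (0::real))"
    by (rule isCont_tendsto_compose[OF ps_isCont[OF e]]) (auto intro!: tendsto_eq_intros)
  show ?thesis using tendsto_mult[OF l1 l2] unfolding Fn_def by simp
qed

lemma ftc_ointegral:
  fixes F g :: "real \<Rightarrow> complex"
  assumes F0: "F 0 = 0" and Flim: "(F \<longlongrightarrow> 0) (at 0)"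
    and der: "\<And>t. t \<noteq> 0 \<Longrightarrow> (F has_vector_derivative g t) (at t)"
  shows "has_ointegral g (F \<rho>) 0 \<rho>"
proof -
  have cont: "continuous_on S F" for S
    unfolding continuous_on_eq_continuous_within
  proof
    fix x assume "x \<in> S"
    show "continuous (at x within S) F"
    proof (cases "x = 0")
      case True
      then show ?thesis using Flim F0
        by (metis continuous_within tendsto_within_subset subset_UNIV)
    next
      case False
      show ?thesis
        by (rule continuous_at_imp_continuous_at_within[OF has_vector_derivative_continuous[OF der[OF False]]])
    qed
  qed
  show ?thesis
  proof (cases "0 \<le> \<rho>")
    case True
    have "(g has_integral (F \<rho> - F 0)) {0..\<rho>}"
      by (rule fundamental_theorem_of_calculus_interior[OF True cont]) (use der in auto)
    then show ?thesis using True F0 by (simp add: has_ointegral_def)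
  next
    case False
    have "(g has_integral (F 0 - F \<rho>)) {\<rho>..0}"
      by (rule fundamental_theorem_of_calculus_interior[OF _ cont]) (use der False in auto)
    then show ?thesis using False F0 by (simp add: has_ointegral_def)
  qed
qed

lemma wcauchy:
  fixes x :: "nat \<Rightarrow> nat \<Rightarrow> complex" and a b :: "nat \<Rightarrow> real"
  assumes le: "\<And>i j. norm (x i j) \<le> a i * b j" and a0: "\<And>i. a i \<ge> 0" and b0: "\<And>j. b j \<ge> 0"
    and sa: "summable a" and sb: "summable b"
  shows "(\<Sum>i. \<Sum>j. x i j) = (\<Sum>n. \<Sum>i\<le>n. x i (n - i))"
proof -
  have rows: "summable (\<lambda>j. norm (x i j))" for i
    by (rule summable_comparison_test'[where N=0, OF summable_mult[OF sb, of "a i"]]) (use le in auto)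
  define X where "X = (\<lambda>(i,j). x i j)"
  have rowsum_le: "(\<Sum>j. norm (x i j)) \<le> a i * (\<Sum>j. b j)" for i
  proof -
    have "(\<Sum>j. norm (x i j)) \<le> (\<Sum>j. a i * b j)"
      by (rule suminf_le) (use le rows summable_mult[OF sb] in auto)
    also have "\<dots> = a i * (\<Sum>j. b j)" by (rule suminf_mult[OF sb])
    finally show ?thesis .
  qed
  have inf_eq: "infsum (\<lambda>j. norm (X (i, j))) UNIV = (\<Sum>j. norm (x i j))" for i
    unfolding X_def
    by (rule infsumI, rule norm_summable_imp_has_sum) (use rows in \<open>auto intro: summable_sums\<close>)
  have absX: "(\<lambda>p. norm (X p)) summable_on (Sigma UNIV (\<lambda>_. UNIV))"
  proof (subst Infinite_Sum.abs_summable_on_Sigma_iff, intro conjI ballI)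
    fix i :: nat
    show "(\<lambda>j. norm (X (i, j))) summable_on UNIV"
      unfolding X_def by (rule norm_summable_imp_summable_on) (use rows in simp)
  next
    have "summable (\<lambda>i. norm (norm (infsum (\<lambda>j. norm (X (i, j))) UNIV)))"
      unfolding inf_eq
      by (rule summable_comparison_test'[where N=0, OF summable_mult2[OF sa, of "\<Sum>j. b j"]])
         (use rowsum_le in \<open>auto simp: suminf_nonneg rows\<close>)
    then show "(\<lambda>i. norm (infsum (\<lambda>j. norm (X (i, j))) UNIV)) summable_on UNIV"
      by (rule norm_summable_imp_summable_on)
  qed
  then have sX: "X summable_on (Sigma UNIV (\<lambda>_. UNIV))" by (rule abs_summable_summable)
  define T where "T = infsum X (Sigma UNIV (\<lambda>_. UNIV))"
  have hX: "(X has_sum T) (Sigma UNIV (\<lambda>_. UNIV))" unfolding T_def using sX by (rule has_sum_infsum)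
  have "((\<lambda>i. \<Sum>j. x i j) has_sum T) UNIV"
  proof (rule has_sum_SigmaD[OF hX])
    fix i :: nat
    show "((\<lambda>j. X (i, j)) has_sum (\<Sum>j. x i j)) UNIV"
      unfolding X_def by (rule norm_summable_imp_has_sum) (use rows in \<open>auto intro: summable_sums summable_norm_cancel\<close>)
  qed
  then have s1: "(\<lambda>i. \<Sum>j. x i j) sums T" by (rule has_sum_imp_sums)
  have hY: "((\<lambda>(n,i). x i (n - i)) has_sum T) (Sigma UNIV (\<lambda>n. {..n}))"
  proof -
    have "((\<lambda>(n,i). x i (n - i)) has_sum T) (Sigma UNIV (\<lambda>n. {..n})) = (X has_sum T) (Sigma UNIV (\<lambda>_. UNIV))"
      by (rule has_sum_reindex_bij_witness[where i="\<lambda>(i,j). (i+j, i)" and j="\<lambda>(n,i). (i, n - i)"])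
         (auto simp: X_def)
    then show ?thesis using hX by simp
  qed
  have "((\<lambda>n. \<Sum>i\<le>n. x i (n - i)) has_sum T) UNIV"
    by (rule has_sum_SigmaD[OF hY]) auto
  then have s2: "(\<lambda>n. \<Sum>i\<le>n. x i (n - i)) sums T" by (rule has_sum_imp_sums)
  show ?thesis using s1 s2 by (simp add: sums_iff)
qed



lemma Gamma_poch: "x \<notin> \<int>\<^sub>\<le>\<^sub>0 \<Longrightarrow> pochhammer x n = Gamma (x + of_nat n) / Gamma x"
  by (rule pochhammer_Gamma)

lemma Gamma_nz: "x \<notin> \<int>\<^sub>\<le>\<^sub>0 \<Longrightarrow> Gamma x \<noteq> 0"
  by (simp add: Gamma_eq_zero_iff)

lemma cg_scale: "cg a b u n * z^n = cg a b 1 n * (u * z)^n"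
  unfolding cg_def power_mult_distrib by (simp add: field_simps)

lemma ps_cg_scale: "ps (cg a b u) z = ps (cg a b 1) (u * z)"
  unfolding ps_def by (simp only: cg_scale[of a b u])

lemma ps_sc_cg_scale: "ps (sc s (cg a b u)) z = ps (sc s (cg a b 1)) (u * z)"
  unfolding ps_def sc_def
proof (intro arg_cong[where f=suminf] ext)
  fix n
  have "c / (s + of_nat n) * w^n = (c * w^n) / (s + of_nat n)" for c w :: complex by simp
  then show "cg a b u n / (s + of_nat n) * z ^ n = cg a b 1 n / (s + of_nat n) * (u * z) ^ n"
    using cg_scale[of a b u n z] by metis
qed

lemma MacRobert1:
  assumes a: "a \<notin> \<int>\<^sub>\<le>\<^sub>0" and b: "b \<notin> \<int>\<^sub>\<le>\<^sub>0"
  shows "MacRobertE [a] [b] w = ps (cg a b 1) (-1 / w)"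
proof -
  define x where "x = -1 / w"
  have e: "entire (cg a b 1)" using entire_cg[OF a b] .
  have s: "(\<lambda>n. cg a b 1 n * x^n) sums ps (cg a b 1) x"
    using e unfolding ps_def by (simp add: entire_def summable_sums)
  then have s2: "(\<lambda>n. Gamma b / Gamma a * (cg a b 1 n * x^n)) sums (Gamma b / Gamma a * ps (cg a b 1) x)"
    by (rule sums_mult)
  have eq: "Gamma b / Gamma a * (cg a b 1 n * x^n) = pochhammer a n / pochhammer b n * x^n / fact n" for n
  proof -
    have bn: "b + of_nat n \<notin> \<int>\<^sub>\<le>\<^sub>0" using nonpos_add_nat[OF b] .
    show ?thesis
      unfolding cg_def Gamma_poch[OF a] Gamma_poch[OF b]
      using Gamma_nz[OF a] Gamma_nz[OF b] Gamma_nz[OF bn]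
      by (simp add: field_simps)
  qed
  have "hyperpFq [a] [b] x = Gamma b / Gamma a * ps (cg a b 1) x"
    using s2 unfolding eq hyperpFq_def by (simp add: sums_iff)
  then show ?thesis unfolding MacRobertE_def x_def[symmetric]
    using Gamma_nz[OF a] Gamma_nz[OF b] by simp
qed

lemma fh2:
  fixes GA GB1 GB GB2 Gbn G1n D f Gan x :: complex
  assumes "GA \<noteq> 0" "GB1 \<noteq> 0" "GB \<noteq> 0" "GB2 \<noteq> 0" "Gbn \<noteq> 0" "G1n \<noteq> 0" "D \<noteq> 0" "f \<noteq> 0"
  shows "inverse (GA * GB1 / (GB * GB2)) * (Gan / Gbn * 1 ^ n / f / D * x ^ n)
     = Gan / GA * (G1n / GB1) / (Gbn / GB * (D * G1n / GB2)) * x ^ n / f"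
  using assms by (simp add: field_simps)

lemma MacRobert2:
  assumes a: "a \<notin> \<int>\<^sub>\<le>\<^sub>0" and b: "b \<notin> \<int>\<^sub>\<le>\<^sub>0" and rb: "Re b > -1"
  shows "MacRobertE [a, b + 1] [b, b + 2] w = ps (sc (b + 1) (cg a b 1)) (-1 / w)"
proof -
  define x where "x = -1 / w"
  have rb1: "Re (b + 1) > 0" using rb by simp
  have b1: "b + 1 \<notin> \<int>\<^sub>\<le>\<^sub>0" using nonpos_add_nat[OF b, of 1] by simp
  have b2: "b + 2 \<notin> \<int>\<^sub>\<le>\<^sub>0" using nonpos_add_nat[OF b, of 2] by simp
  have e: "entire (sc (b+1) (cg a b 1))" using entire_sc[OF entire_cg[OF a b] rb1] .
  have s: "(\<lambda>n. sc (b+1) (cg a b 1) n * x^n) sums ps (sc (b+1) (cg a b 1)) x"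
    using e unfolding ps_def by (simp add: entire_def summable_sums)
  define K where "K = Gamma a * Gamma (b + 1) / (Gamma b * Gamma (b + 2))"
  have Knz: "K \<noteq> 0" unfolding K_def using Gamma_nz[OF a] Gamma_nz[OF b] Gamma_nz[OF b1] Gamma_nz[OF b2] by simp
  then have s2: "(\<lambda>n. inverse K * (sc (b+1) (cg a b 1) n * x^n)) sums (inverse K * ps (sc (b+1) (cg a b 1)) x)"
    using s by (rule_tac sums_mult)
  have eq: "inverse K * (sc (b+1) (cg a b 1) n * x^n)
      = pochhammer a n * pochhammer (b + 1) n / (pochhammer b n * pochhammer (b + 2) n) * x^n / fact n" for n
  proof -
    have bn: "b + of_nat n \<notin> \<int>\<^sub>\<le>\<^sub>0" using nonpos_add_nat[OF b] .
    have b1n: "b + 1 + of_nat n \<notin> \<int>\<^sub>\<le>\<^sub>0" using nonpos_add_nat[OF b1] .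
    have g2: "Gamma (b + 2 + of_nat n) = (b + 1 + of_nat n) * Gamma (b + 1 + of_nat n)"
      using Gamma_plus1[OF b1n] by (simp add: add_ac)
    have nz: "b + 1 + of_nat n \<noteq> 0" using b1n by auto
    have nz2: "b + (1 + of_nat n) \<noteq> 0" using nz by (simp add: add_ac)
    show ?thesis
      unfolding cg_def sc_def Gamma_poch[OF a] Gamma_poch[OF b] Gamma_poch[OF b1] Gamma_poch[OF b2] g2 K_def
      by (rule fh2) (use Gamma_nz[OF a] Gamma_nz[OF b] Gamma_nz[OF bn] Gamma_nz[OF b1] Gamma_nz[OF b2] Gamma_nz[OF b1n] nz in simp_all)
  qed
  have "hyperpFq [a, b + 1] [b, b + 2] x = inverse K * ps (sc (b+1) (cg a b 1)) x"
    using s2 unfolding eq hyperpFq_def by (simp add: sums_iff)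
  then show ?thesis unfolding MacRobertE_def x_def[symmetric]
    using Knz unfolding K_def by (simp add: field_simps)
qed


lemma Re_pos_not_nonpos: "Re b > 0 \<Longrightarrow> b \<notin> \<int>\<^sub>\<le>\<^sub>0"
  by (auto elim!: nonpos_Ints_cases')

lemma fE_term:
  assumes rb: "Re b > 0" and a1: "a + 1 \<notin> \<int>\<^sub>\<le>\<^sub>0" and d: "d \<notin> \<int>\<^sub>\<le>\<^sub>0" and ac: "a + c \<notin> \<int>\<^sub>\<le>\<^sub>0"
    and z: "z \<noteq> 0"
  shows "(\<lambda>k. cg (a + c) b (-\<i>) \<nu> * z^\<nu> * (cg (a + 1) d \<i> k * z^k) / (b + of_nat (\<nu> + k)))
     sums ((1 / (\<i> / z)) ^ \<nu> * Gamma (a + c + of_nat \<nu>) / (fact \<nu> * Gamma (b + of_nat \<nu>))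
           * MacRobertE [a + 1, b + of_nat \<nu>] [d, b + 1 + of_nat \<nu>] (\<i> / z))"
proof -
  define p where "p = cg (a + c) b (-\<i>)"
  define q where "q = cg (a + 1) d \<i>"
  have b: "b \<notin> \<int>\<^sub>\<le>\<^sub>0" using Re_pos_not_nonpos[OF rb] .
  have bv: "b + of_nat \<nu> \<notin> \<int>\<^sub>\<le>\<^sub>0" using nonpos_add_nat[OF b] .
  have b1v: "b + 1 + of_nat \<nu> \<notin> \<int>\<^sub>\<le>\<^sub>0" using nonpos_add_nat[OF b, of "Suc \<nu>"] by (simp add: add_ac)
  have acv: "a + c + of_nat \<nu> \<notin> \<int>\<^sub>\<le>\<^sub>0" using nonpos_add_nat[OF ac] .
  define G where "G = Gamma (a + 1) * Gamma (b + of_nat \<nu>) / (Gamma d * Gamma (b + 1 + of_nat \<nu>))"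
  define P where "P = (1 / (\<i> / z)) ^ \<nu> * Gamma (a + c + of_nat \<nu>) / (fact \<nu> * Gamma (b + of_nat \<nu>)) * G"
  have Pnz: "P \<noteq> 0" unfolding P_def G_def
    using z Gamma_nz[OF a1] Gamma_nz[OF d] Gamma_nz[OF bv] Gamma_nz[OF b1v] Gamma_nz[OF acv] by simp
  have iz: "-1 / (\<i> / z) = \<i> * z" using z by (simp add: field_simps)
  have M: "MacRobertE [a + 1, b + of_nat \<nu>] [d, b + 1 + of_nat \<nu>] (\<i> / z)
      = G * hyperpFq [a + 1, b + of_nat \<nu>] [d, b + 1 + of_nat \<nu>] (\<i> * z)"
    unfolding MacRobertE_def G_def iz by simp
  define h where "h = (\<lambda>k. pochhammer (a + 1) k * pochhammer (b + of_nat \<nu>) k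
        / (pochhammer d k * pochhammer (b + 1 + of_nat \<nu>) k) * (\<i> * z) ^ k / fact k)"
  have H: "hyperpFq [a + 1, b + of_nat \<nu>] [d, b + 1 + of_nat \<nu>] (\<i> * z) = (\<Sum>k. h k)"
    unfolding hyperpFq_def h_def by (simp add: ac_simps)
  have xeq: "p \<nu> * z^\<nu> * (q k * z^k) / (b + of_nat (\<nu> + k)) = P * h k" for k
  proof -
    have bvk: "b + of_nat \<nu> + of_nat k \<notin> \<int>\<^sub>\<le>\<^sub>0" using nonpos_add_nat[OF bv] .
    have dk: "d + of_nat k \<notin> \<int>\<^sub>\<le>\<^sub>0" using nonpos_add_nat[OF d] .
    have g1: "Gamma (b + 1 + of_nat \<nu> + of_nat k) = (b + of_nat \<nu> + of_nat k) * Gamma (b + of_nat \<nu> + of_nat k)"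
      using Gamma_plus1[OF bvk] by (simp add: add_ac)
    define D where "D = b + of_nat \<nu> + of_nat k"
    have Dnz: "D \<noteq> 0" unfolding D_def using bvk by auto
    have GD: "Gamma D \<noteq> 0" unfolding D_def using Gamma_nz[OF bvk] .
    have D2: "b + of_nat (\<nu> + k) = D" unfolding D_def by simp
    have inv: "1 / (\<i> / z) = - \<i> * z" using z by (simp add: field_simps)
    show ?thesis
      unfolding p_def q_def cg_def h_def P_def G_def D2 inv
        Gamma_poch[OF a1] Gamma_poch[OF bv] Gamma_poch[OF d] Gamma_poch[OF b1v] g1 D_def[symmetric]
        power_mult_distrib
      using Dnz GD z Gamma_nz[OF a1] Gamma_nz[OF d] Gamma_nz[OF bv] Gamma_nz[OF b1v] Gamma_nz[OF acv]
        Gamma_nz[OF bvk] Gamma_nz[OF dk]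
      by (simp add: field_simps add_ac)
  qed
  have summ: "summable (\<lambda>k. p \<nu> * z^\<nu> * (q k * z^k) / (b + of_nat (\<nu> + k)))"
  proof -
    have eq: "entire q" unfolding q_def
      by (rule entire_cg[OF a1 d])
    have "entire (sc (b + of_nat \<nu>) q)" by (rule entire_sc[OF eq]) (use rb in simp)
    then have "summable (\<lambda>k. p \<nu> * z^\<nu> * (sc (b + of_nat \<nu>) q k * z^k))"
      by (intro summable_mult) (simp add: entire_def)
    then show ?thesis by (simp add: sc_def add_ac)
  qed
  then have "(\<lambda>k. p \<nu> * z^\<nu> * (q k * z^k) / (b + of_nat (\<nu> + k))) sums (\<Sum>k. P * h k)"
    unfolding xeq by (simp add: summable_sums)
  moreover have "(\<Sum>k. P * h k) = P * (\<Sum>k. h k)"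
  proof -
    have "summable (\<lambda>k. P * h k)" using summ unfolding xeq .
    then have "summable h" using Pnz by (simp add: summable_cmult_iff)
    then show ?thesis by (rule suminf_mult)
  qed
  moreover have "P * (\<Sum>k. h k) = (1 / (\<i> / z)) ^ \<nu> * Gamma (a + c + of_nat \<nu>) / (fact \<nu> * Gamma (b + of_nat \<nu>))
           * MacRobertE [a + 1, b + of_nat \<nu>] [d, b + 1 + of_nat \<nu>] (\<i> / z)"
    unfolding M H P_def by (simp add: ac_simps)
  ultimately show ?thesis unfolding p_def q_def by simp
qed

lemma fE_repr:
  assumes rb: "Re b > 0" and a1: "a + 1 \<notin> \<int>\<^sub>\<le>\<^sub>0" and d: "d \<notin> \<int>\<^sub>\<le>\<^sub>0" and ac: "a + c \<notin> \<int>\<^sub>\<le>\<^sub>0"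
    and rho: "\<rho> \<noteq> 0"
  shows "complex_of_real \<rho> powr b * fE a b c d (\<i> / complex_of_real \<rho>)
      = Fn b (cauchy (cg (a + c) b (-\<i>)) (cg (a + 1) d \<i>)) \<rho>"
proof -
  define z where "z = complex_of_real \<rho>"
  have z: "z \<noteq> 0" using rho by (simp add: z_def)
  define p where "p = cg (a + c) b (-\<i>)"
  define q where "q = cg (a + 1) d \<i>"
  have b: "b \<notin> \<int>\<^sub>\<le>\<^sub>0" using Re_pos_not_nonpos[OF rb] .
  have ep: "entire p" unfolding p_def by (rule entire_cg[OF ac b])
  have eq: "entire q" unfolding q_def by (rule entire_cg[OF a1 d])
  define x where "x = (\<lambda>i j. p i * z^i * (q j * z^j) / (b + of_nat (i + j)))"
  have fE: "fE a b c d (\<i> / z) = (\<Sum>i. \<Sum>j. x i j)"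
    unfolding fE_def
  proof (intro arg_cong[where f=suminf] ext)
    fix \<nu>
    show "(1 / (\<i> / z)) ^ \<nu> * Gamma (a + c + of_nat \<nu>) / (fact \<nu> * Gamma (b + of_nat \<nu>))
           * MacRobertE [a + 1, b + of_nat \<nu>] [d, b + 1 + of_nat \<nu>] (\<i> / z) = (\<Sum>j. x \<nu> j)"
      using fE_term[OF rb a1 d ac z, of \<nu>] unfolding x_def p_def q_def by (simp add: sums_iff)
  qed
  have W: "(\<Sum>i. \<Sum>j. x i j) = (\<Sum>n. \<Sum>i\<le>n. x i (n - i))"
  proof (rule wcauchy[where a="\<lambda>i. norm (p i * z^i)" and b="\<lambda>j. norm (q j * z^j) / Re b"])
    fix i j
    have "norm (x i j) = norm (p i * z^i) * norm (q j * z^j) / norm (b + of_nat (i + j))"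
      unfolding x_def by (simp add: norm_mult norm_divide)
    also have "\<dots> \<le> norm (p i * z^i) * norm (q j * z^j) / Re b"
      using norm_s_plus_n[OF rb, of "i + j"] rb
      by (intro divide_left_mono mult_pos_pos) (auto intro: order.strict_trans2)
    finally show "norm (x i j) \<le> norm (p i * z^i) * (norm (q j * z^j) / Re b)" by simp
  next
    show "summable (\<lambda>i. norm (p i * z^i))" by (rule entire_abs[OF ep])
    show "summable (\<lambda>j. norm (q j * z^j) / Re b)" by (intro summable_divide entire_abs[OF eq])
  qed (use rb in auto)
  have inner: "(\<Sum>i\<le>n. x i (n - i)) = sc b (cauchy p q) n * z^n" for n
  proof -
    have "(\<Sum>i\<le>n. x i (n - i)) = (\<Sum>i\<le>n. (p i * z^i) * (q (n - i) * z^(n - i))) / (b + of_nat n)"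
      unfolding x_def sum_divide_distrib by (intro sum.cong refl) auto
    also have "\<dots> = sc b (cauchy p q) n * z^n"
      unfolding sc_def cauchy_term[symmetric] by simp
    finally show ?thesis .
  qed
  have "fE a b c d (\<i> / z) = ps (sc b (cauchy p q)) z"
    unfolding fE W ps_def inner ..
  then show ?thesis unfolding Fn_def z_def[symmetric] p_def q_def by simp
qed


definition shr :: "(nat \<Rightarrow> complex) \<Rightarrow> nat \<Rightarrow> complex" where
  "shr c n = (case n of 0 \<Rightarrow> 0 | Suc m \<Rightarrow> c m)"

lemma shr_0 [simp]: "shr c 0 = 0" and shr_Suc [simp]: "shr c (Suc m) = c m"
  by (simp_all add: shr_def)

lemma ps_shr:
  assumes "entire c" shows "z * ps c z = ps (shr c) z" and "entire (shr c)"
proof -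
  have "(\<lambda>n. c n * z^n) sums ps c z" using assms unfolding ps_def by (simp add: entire_def summable_sums)
  then have "(\<lambda>n. z * (c n * z^n)) sums (z * ps c z)" by (rule sums_mult)
  then have "(\<lambda>n. (\<lambda>n. shr c n * z^n) (Suc n)) sums (z * ps c z)" by (simp add: algebra_simps)
  then have "(\<lambda>n. shr c n * z^n) sums (z * ps c z)" by (subst (asm) sums_Suc_iff) simp
  then show "z * ps c z = ps (shr c) z" unfolding ps_def by (simp add: sums_iff)
  show "entire (shr c)" unfolding entire_def
  proof
    fix w
    have "summable (\<lambda>n. w * (c n * w^n))" using assms by (intro summable_mult) (simp add: entire_def)
    then have "summable (\<lambda>n. (\<lambda>n. shr c n * w^n) (Suc n))" by (simp add: algebra_simps)
    then show "summable (\<lambda>n. shr c n * w^n)" by (subst (asm) summable_Suc_iff)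
  qed
qed

lemma ps_lin:
  assumes "entire c1" "entire c2"
  shows "x * ps c1 z + y * ps c2 z = ps (\<lambda>n. x * c1 n + y * c2 n) z"
proof -
  have "(\<lambda>n. x * (c1 n * z^n)) sums (x * ps c1 z)" using assms(1) unfolding ps_def
    by (intro sums_mult) (simp add: entire_def summable_sums)
  moreover have "(\<lambda>n. y * (c2 n * z^n)) sums (y * ps c2 z)" using assms(2) unfolding ps_def
    by (intro sums_mult) (simp add: entire_def summable_sums)
  ultimately have "(\<lambda>n. x * (c1 n * z^n) + y * (c2 n * z^n)) sums (x * ps c1 z + y * ps c2 z)"
    by (rule sums_add)
  then show ?thesis unfolding ps_def by (simp add: sums_iff algebra_simps)
qed

lemma ps_cong: "(\<And>n. c1 n = c2 n) \<Longrightarrow> ps c1 z = ps c2 z"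
  by (simp add: ps_def)

lemma ps_cmult:
  assumes "entire c" shows "ps (\<lambda>n. x * c n) z = x * ps c z"
  using ps_lin[OF assms assms, of x z 0] by simp

lemma coef2:
  assumes ag: "ag \<notin> \<int>\<^sub>\<le>\<^sub>0" and b: "b \<notin> \<int>\<^sub>\<le>\<^sub>0"
  shows "b * cg ag (b + 1) (-\<i>) n + (-\<i>) * shr (cg (ag + 1) (b + 2) (-\<i>)) n = cg ag b (-\<i>) n"
proof (cases n)
  case 0
  have g: "Gamma (b + 1) = b * Gamma b" by (rule Gamma_plus1[OF b])
  have "b \<noteq> 0" using b by auto
  then show ?thesis using 0 Gamma_nz[OF b] by (simp add: cg_def g)
next
  case (Suc m)
  have bm: "b + 1 + of_nat m \<notin> \<int>\<^sub>\<le>\<^sub>0" using nonpos_add_nat[OF b, of "Suc m"] by (simp add: add_ac)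
  define X where "X = Gamma (ag + 1 + of_nat m)"
  define Y where "Y = Gamma (b + 1 + of_nat m)"
  define D where "D = b + 1 + of_nat m"
  have e1: "Gamma (ag + of_nat (Suc m)) = X" unfolding X_def by (simp add: add_ac)
  have e2: "Gamma (b + of_nat (Suc m)) = Y" unfolding Y_def by (simp add: add_ac)
  have e3: "Gamma (b + 1 + of_nat (Suc m)) = D * Y" and e3': "Gamma (b + 2 + of_nat m) = D * Y"
    using Gamma_plus1[OF bm] unfolding Y_def D_def by (simp_all add: add_ac)
  have Ynz: "Y \<noteq> 0" unfolding Y_def using Gamma_nz[OF bm] .
  have Dnz: "D \<noteq> 0" unfolding D_def using bm by auto
  define M1 where "M1 = (of_nat (Suc m) :: complex)"
  have f1: "(fact (Suc m) :: complex) = M1 * fact m" unfolding M1_def by (simp del: of_nat_Suc)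
  have M1nz: "M1 \<noteq> 0" unfolding M1_def by (simp only: of_nat_eq_0_iff)
  show ?thesis unfolding Suc cg_def shr_Suc e1 e2 e3 e3' X_def[symmetric] f1
    using Ynz Dnz M1nz apply (simp add: field_simps)
    apply (simp add: D_def M1_def algebra_simps)
    done
qed

lemma coef1:
  assumes ag: "ag \<notin> \<int>\<^sub>\<le>\<^sub>0" and b: "b \<notin> \<int>\<^sub>\<le>\<^sub>0"
  shows "\<i> * sc (b + 1) (cg ag b (-\<i>)) n = (\<i> * b) * cg ag (b + 2) (-\<i>) n + 1 * shr (cg (ag + 1) (b + 3) (-\<i>)) n"
proof (cases n)
  case 0
  have b1: "b + 1 \<notin> \<int>\<^sub>\<le>\<^sub>0" using nonpos_add_nat[OF b, of 1] by simp
  have g: "Gamma (b + 2) = (b + 1) * (b * Gamma b)"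
    using Gamma_plus1[OF b1] Gamma_plus1[OF b] by (simp add: add_ac)
  define E1 where "E1 = b + 1"
  define G where "G = Gamma b"
  have "b \<noteq> 0" "E1 \<noteq> 0" "G \<noteq> 0" using b b1 Gamma_nz[OF b] by (auto simp: E1_def G_def)
  moreover have "Gamma (b + 2) = E1 * (b * G)" using g by (simp add: E1_def G_def)
  moreover have "b + 1 + of_nat 0 = E1" by (simp add: E1_def)
  ultimately show ?thesis using 0 by (simp add: cg_def sc_def G_def[symmetric] field_simps)
next
  case (Suc m)
  have bm: "b + 1 + of_nat m \<notin> \<int>\<^sub>\<le>\<^sub>0" using nonpos_add_nat[OF b, of "Suc m"] by (simp add: add_ac)
  have bm2: "b + 2 + of_nat m \<notin> \<int>\<^sub>\<le>\<^sub>0" using nonpos_add_nat[OF b, of "Suc (Suc m)"] by (simp add: add_ac)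
  define X where "X = Gamma (ag + 1 + of_nat m)"
  define Y where "Y = Gamma (b + 1 + of_nat m)"
  define D1 where "D1 = b + 1 + of_nat m"
  define D2 where "D2 = b + 2 + of_nat m"
  have e1: "Gamma (ag + of_nat (Suc m)) = X" unfolding X_def by (simp add: add_ac)
  have e2: "Gamma (b + of_nat (Suc m)) = Y" unfolding Y_def by (simp add: add_ac)
  have g1: "Gamma (b + 2 + of_nat m) = D1 * Y" using Gamma_plus1[OF bm] unfolding Y_def D1_def by (simp add: add_ac)
  have g2: "Gamma (b + 3 + of_nat m) = D2 * (D1 * Y)" using Gamma_plus1[OF bm2] g1 unfolding D2_def by (simp add: add_ac)
  have e3: "Gamma (b + 2 + of_nat (Suc m)) = D2 * (D1 * Y)" using g2 by (simp add: add_ac)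
  have e4: "b + 1 + of_nat (Suc m) = D2" unfolding D2_def by (simp add: add_ac)
  have Ynz: "Y \<noteq> 0" unfolding Y_def using Gamma_nz[OF bm] .
  have D1nz: "D1 \<noteq> 0" unfolding D1_def using bm by auto
  have D2nz: "D2 \<noteq> 0" unfolding D2_def using bm2 by auto
  define M1 where "M1 = (of_nat (Suc m) :: complex)"
  have f1: "(fact (Suc m) :: complex) = M1 * fact m" unfolding M1_def by (simp del: of_nat_Suc)
  have M1nz: "M1 \<noteq> 0" unfolding M1_def by (simp only: of_nat_eq_0_iff)
  show ?thesis unfolding Suc cg_def sc_def shr_Suc e1 e2 e3 e4 g2 X_def[symmetric] f1
    using Ynz D1nz D2nz M1nz apply (simp add: field_simps)
    apply (simp add: D1_def D2_def M1_def algebra_simps)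
    done
qed

lemma coef_diffs:
  assumes a: "a \<notin> \<int>\<^sub>\<le>\<^sub>0" and b: "b \<notin> \<int>\<^sub>\<le>\<^sub>0"
  shows "diffs (cg a b u) n = u * cg (a + 1) (b + 1) u n"
proof -
  define X where "X = Gamma (a + 1 + of_nat n)"
  define Y where "Y = Gamma (b + 1 + of_nat n)"
  have e1: "Gamma (a + of_nat (Suc n)) = X" unfolding X_def by (simp add: add_ac)
  have e2: "Gamma (b + of_nat (Suc n)) = Y" unfolding Y_def by (simp add: add_ac)
  show ?thesis unfolding diffs_def cg_def e1 e2 X_def[symmetric] Y_def[symmetric]
    by (simp add: field_simps del: of_nat_Suc)
qed


lemma integrand_eq:
  assumes a: "\<alpha> \<notin> \<int>\<^sub>\<le>\<^sub>0" and b: "\<beta> \<notin> \<int>\<^sub>\<le>\<^sub>0" and ag: "\<alpha> + \<gamma> \<notin> \<int>\<^sub>\<le>\<^sub>0"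
  shows "complex_of_real t powr \<beta> * MacRobertE [\<alpha>] [\<beta>] (\<i> / complex_of_real t)
                 * MacRobertE [\<alpha> + \<gamma>] [\<beta>] (- \<i> / complex_of_real t)
       = complex_of_real t powr \<beta> * (ps (cg \<alpha> \<beta> \<i>) (complex_of_real t) * ps (cg (\<alpha> + \<gamma>) \<beta> (-\<i>)) (complex_of_real t))"
proof -
  have i1: "-1 / (\<i> / z) = \<i> * z" for z :: complex by (cases "z = 0") (simp_all add: field_simps)
  have i2: "-1 / (-\<i> / z) = -\<i> * z" for z :: complex by (cases "z = 0") (simp_all add: field_simps)
  show ?thesis
    unfolding MacRobert1[OF a b] MacRobert1[OF ag b] i1 i2 ps_cg_scale[of _ _ "\<i>"] ps_cg_scale[of _ _ "-\<i>"]
    by simp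
qed

lemma powr_plus_nat:
  assumes "t \<noteq> 0"
  shows "complex_of_real t powr (s + 1) = complex_of_real t powr s * complex_of_real t"
  using assms by (simp add: powr_add)

lemma form2:
  fixes \<alpha> \<beta> \<gamma> :: complex and \<rho> :: real
  assumes rb: "Re \<beta> > -1"
    and b: "\<beta> \<notin> \<int>\<^sub>\<le>\<^sub>0"
    and a: "\<alpha> \<notin> \<int>\<^sub>\<le>\<^sub>0"
    and ag: "\<alpha> + \<gamma> \<notin> \<int>\<^sub>\<le>\<^sub>0"
    and rho: "\<rho> \<noteq> 0"
  shows "has_ointegral
           (\<lambda>t. complex_of_real t powr \<beta> * MacRobertE [\<alpha>] [\<beta>] (\<i> / complex_of_real t)
                 * MacRobertE [\<alpha> + \<gamma>] [\<beta>] (- \<i> / complex_of_real t))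
           (complex_of_real \<rho> powr (\<beta> + 1)
              * (\<beta> * fE (\<alpha> - 1) (\<beta> + 1) (\<gamma> + 1) \<beta> (\<i> / complex_of_real \<rho>)
                 - \<i> * complex_of_real \<rho> * fE (\<alpha> - 1) (\<beta> + 2) (\<gamma> + 2) \<beta> (\<i> / complex_of_real \<rho>)))
           0 \<rho>"
proof -
  have ag1: "\<alpha> + \<gamma> + 1 \<notin> \<int>\<^sub>\<le>\<^sub>0" using nonpos_add_nat[OF ag, of 1] by simp
  have b1: "\<beta> + 1 \<notin> \<int>\<^sub>\<le>\<^sub>0" using nonpos_add_nat[OF b, of 1] by simp
  have b2: "\<beta> + 2 \<notin> \<int>\<^sub>\<le>\<^sub>0" using nonpos_add_nat[OF b, of 2] by simp
  have rb1: "Re (\<beta> + 1) > 0" and rb2: "Re (\<beta> + 2) > 0" using rb by simp_all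
  define A where "A = cg \<alpha> \<beta> \<i>"
  define Bt where "Bt = cg (\<alpha> + \<gamma>) \<beta> (-\<i>)"
  define P1 where "P1 = cg (\<alpha> + \<gamma>) (\<beta> + 1) (-\<i>)"
  define P2 where "P2 = cg (\<alpha> + \<gamma> + 1) (\<beta> + 2) (-\<i>)"
  have eA: "entire A" unfolding A_def by (rule entire_cg[OF a b])
  have eB: "entire Bt" unfolding Bt_def by (rule entire_cg[OF ag b])
  have eP1: "entire P1" unfolding P1_def by (rule entire_cg[OF ag b1])
  have eP2: "entire P2" unfolding P2_def by (rule entire_cg[OF ag1 b2])
  define W1 where "W1 = cauchy P1 A"
  define W2 where "W2 = cauchy P2 A"
  have eW1: "entire W1" and psW1: "\<And>z. ps W1 z = ps P1 z * ps A z"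
    unfolding W1_def using entire_cauchy[OF eP1 eA] by auto
  have eW2: "entire W2" and psW2: "\<And>z. ps W2 z = ps P2 z * ps A z"
    unfolding W2_def using entire_cauchy[OF eP2 eA] by auto
  define F where "F = (\<lambda>t. \<beta> * Fn (\<beta> + 1) W1 t + (-\<i>) * Fn (\<beta> + 2) W2 t)"
  have r1: "complex_of_real \<rho> powr (\<beta> + 1) * fE (\<alpha> - 1) (\<beta> + 1) (\<gamma> + 1) \<beta> (\<i> / complex_of_real \<rho>) = Fn (\<beta> + 1) W1 \<rho>"
    using fE_repr[of "\<beta> + 1" "\<alpha> - 1" \<beta> "\<gamma> + 1" \<rho>] rb1 a b ag rho
    by (simp add: W1_def P1_def A_def)
  have r2: "complex_of_real \<rho> powr (\<beta> + 2) * fE (\<alpha> - 1) (\<beta> + 2) (\<gamma> + 2) \<beta> (\<i> / complex_of_real \<rho>) = Fn (\<beta> + 2) W2 \<rho>"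
    using fE_repr[of "\<beta> + 2" "\<alpha> - 1" \<beta> "\<gamma> + 2" \<rho>] rb2 a b ag1 rho
    by (simp add: W2_def P2_def A_def add_ac)
  have pw: "complex_of_real \<rho> powr (\<beta> + 2) = complex_of_real \<rho> powr (\<beta> + 1) * complex_of_real \<rho>"
    using powr_plus_nat[OF rho, of "\<beta> + 1"] by (simp add: add_ac)
  have val: "complex_of_real \<rho> powr (\<beta> + 1)
              * (\<beta> * fE (\<alpha> - 1) (\<beta> + 1) (\<gamma> + 1) \<beta> (\<i> / complex_of_real \<rho>)
                 - \<i> * complex_of_real \<rho> * fE (\<alpha> - 1) (\<beta> + 2) (\<gamma> + 2) \<beta> (\<i> / complex_of_real \<rho>)) = F \<rho>"
    unfolding F_def r1[symmetric] r2[symmetric] pw by (simp add: algebra_simps)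
  have der: "(F has_vector_derivative
      (complex_of_real t powr \<beta> * MacRobertE [\<alpha>] [\<beta>] (\<i> / complex_of_real t)
                 * MacRobertE [\<alpha> + \<gamma>] [\<beta>] (- \<i> / complex_of_real t))) (at t)" if t: "t \<noteq> 0" for t
  proof -
    define z where "z = complex_of_real t"
    have d: "(F has_vector_derivative
        (\<beta> * (complex_of_real t powr (\<beta> + 1 - 1) * ps W1 z) + (-\<i>) * (complex_of_real t powr (\<beta> + 2 - 1) * ps W2 z))) (at t)"
      unfolding F_def z_def
      by (intro has_vector_derivative_add has_vector_derivative_mult_right Fn_deriv eW1 eW2 rb1 rb2 t)
    have pw1: "complex_of_real t powr (\<beta> + 2 - 1) = complex_of_real t powr \<beta> * z"
      using powr_plus_nat[OF t, of \<beta>] by (simp add: z_def add_ac)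
    have key: "\<beta> * ps P1 z + (-\<i>) * (z * ps P2 z) = ps Bt z"
    proof -
      have "\<beta> * ps P1 z + (-\<i>) * (z * ps P2 z) = \<beta> * ps P1 z + (-\<i>) * ps (shr P2) z"
        using ps_shr(1)[OF eP2] by simp
      also have "\<dots> = ps (\<lambda>n. \<beta> * P1 n + (-\<i>) * shr P2 n) z"
        by (rule ps_lin[OF eP1 ps_shr(2)[OF eP2]])
      also have "\<dots> = ps Bt z"
        unfolding P1_def P2_def Bt_def by (rule ps_cong, rule coef2[OF ag b])
      finally show ?thesis .
    qed
    have "\<beta> * (complex_of_real t powr (\<beta> + 1 - 1) * ps W1 z) + (-\<i>) * (complex_of_real t powr (\<beta> + 2 - 1) * ps W2 z)
        = complex_of_real t powr \<beta> * ps A z * (\<beta> * ps P1 z + (-\<i>) * (z * ps P2 z))"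
      unfolding pw1 psW1 psW2 by (simp add: algebra_simps)
    also have "\<dots> = complex_of_real t powr \<beta> * MacRobertE [\<alpha>] [\<beta>] (\<i> / complex_of_real t)
                 * MacRobertE [\<alpha> + \<gamma>] [\<beta>] (- \<i> / complex_of_real t)"
      unfolding key unfolding integrand_eq[OF a b ag] A_def Bt_def z_def by (simp add: algebra_simps)
    finally show ?thesis using d by simp
  qed
  have F0: "F 0 = 0" unfolding F_def by (simp add: Fn_0)
  have Flim: "(F \<longlongrightarrow> 0) (at 0)"
  proof -
    have "(F \<longlongrightarrow> \<beta> * 0 + (-\<i>) * 0) (at 0)"
      unfolding F_def by (intro tendsto_add tendsto_mult tendsto_const Fn_lim eW1 eW2 rb1 rb2)
    then show ?thesis by simp
  qed
  show ?thesis unfolding val by (rule ftc_ointegral[OF F0 Flim der])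
qed

lemma form1:
  fixes \<alpha> \<beta> \<gamma> :: complex and \<rho> :: real
  assumes rb: "Re \<beta> > -1"
    and b: "\<beta> \<notin> \<int>\<^sub>\<le>\<^sub>0"
    and a: "\<alpha> \<notin> \<int>\<^sub>\<le>\<^sub>0"
    and ag: "\<alpha> + \<gamma> \<notin> \<int>\<^sub>\<le>\<^sub>0"
    and rho: "\<rho> \<noteq> 0"
  shows "has_ointegral
           (\<lambda>t. complex_of_real t powr \<beta> * MacRobertE [\<alpha>] [\<beta>] (\<i> / complex_of_real t)
                 * MacRobertE [\<alpha> + \<gamma>] [\<beta>] (- \<i> / complex_of_real t))
           (complex_of_real \<rho> powr (\<beta> + 1) * MacRobertE [\<alpha>] [\<beta>] (\<i> / complex_of_real \<rho>)
              * MacRobertE [\<alpha> + \<gamma>, \<beta> + 1] [\<beta>, \<beta> + 2] (- \<i> / complex_of_real \<rho>)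
            - \<i> * complex_of_real \<rho> powr (\<beta> + 2) * \<beta>
              * fE \<alpha> (\<beta> + 2) \<gamma> (\<beta> + 1) (\<i> / complex_of_real \<rho>)
            - complex_of_real \<rho> powr (\<beta> + 3)
              * fE \<alpha> (\<beta> + 3) (\<gamma> + 1) (\<beta> + 1) (\<i> / complex_of_real \<rho>))
           0 \<rho>"
proof -
  have ag1: "\<alpha> + \<gamma> + 1 \<notin> \<int>\<^sub>\<le>\<^sub>0" using nonpos_add_nat[OF ag, of 1] by simp
  have a1: "\<alpha> + 1 \<notin> \<int>\<^sub>\<le>\<^sub>0" using nonpos_add_nat[OF a, of 1] by simp
  have b1: "\<beta> + 1 \<notin> \<int>\<^sub>\<le>\<^sub>0" using nonpos_add_nat[OF b, of 1] by simp
  have b2: "\<beta> + 2 \<notin> \<int>\<^sub>\<le>\<^sub>0" using nonpos_add_nat[OF b, of 2] by simp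
  have b3: "\<beta> + 3 \<notin> \<int>\<^sub>\<le>\<^sub>0" using nonpos_add_nat[OF b, of 3] by simp
  have rb1: "Re (\<beta> + 1) > 0" and rb2: "Re (\<beta> + 2) > 0" and rb3: "Re (\<beta> + 3) > 0" using rb by simp_all
  define A where "A = cg \<alpha> \<beta> \<i>"
  define Bt where "Bt = cg (\<alpha> + \<gamma>) \<beta> (-\<i>)"
  define P where "P = cg (\<alpha> + \<gamma>) (\<beta> + 2) (-\<i>)"
  define P' where "P' = cg (\<alpha> + \<gamma> + 1) (\<beta> + 3) (-\<i>)"
  define Q where "Q = cg (\<alpha> + 1) (\<beta> + 1) \<i>"
  have eA: "entire A" unfolding A_def by (rule entire_cg[OF a b])
  have eB: "entire Bt" unfolding Bt_def by (rule entire_cg[OF ag b])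
  have eP: "entire P" unfolding P_def by (rule entire_cg[OF ag b2])
  have eP': "entire P'" unfolding P'_def by (rule entire_cg[OF ag1 b3])
  have eQ: "entire Q" unfolding Q_def by (rule entire_cg[OF a1 b1])
  define V1 where "V1 = cauchy P Q"
  define V2 where "V2 = cauchy P' Q"
  have eV1: "entire V1" and psV1: "\<And>z. ps V1 z = ps P z * ps Q z"
    unfolding V1_def using entire_cauchy[OF eP eQ] by auto
  have eV2: "entire V2" and psV2: "\<And>z. ps V2 z = ps P' z * ps Q z"
    unfolding V2_def using entire_cauchy[OF eP' eQ] by auto
  define F where "F = (\<lambda>t. ps A (complex_of_real t) * Fn (\<beta> + 1) Bt t
      - \<i> * \<beta> * Fn (\<beta> + 2) V1 t - Fn (\<beta> + 3) V2 t)"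
  have i1: "-1 / (\<i> / z) = \<i> * z" for z :: complex by (cases "z = 0") (simp_all add: field_simps)
  have i2: "-1 / (-\<i> / z) = -\<i> * z" for z :: complex by (cases "z = 0") (simp_all add: field_simps)
  have m0: "MacRobertE [\<alpha>] [\<beta>] (\<i> / complex_of_real \<rho>) = ps A (complex_of_real \<rho>)"
    unfolding MacRobert1[OF a b] i1 A_def ps_cg_scale[of _ _ "\<i>"] ..
  have m1: "complex_of_real \<rho> powr (\<beta> + 1) * MacRobertE [\<alpha> + \<gamma>, \<beta> + 1] [\<beta>, \<beta> + 2] (- \<i> / complex_of_real \<rho>)
      = Fn (\<beta> + 1) Bt \<rho>"
    unfolding MacRobert2[OF ag b rb] i2 Fn_def Bt_def ps_sc_cg_scale[of _ _ _ "-\<i>"] ..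
  have r1: "complex_of_real \<rho> powr (\<beta> + 2) * fE \<alpha> (\<beta> + 2) \<gamma> (\<beta> + 1) (\<i> / complex_of_real \<rho>) = Fn (\<beta> + 2) V1 \<rho>"
    using fE_repr[of "\<beta> + 2" \<alpha> "\<beta> + 1" \<gamma> \<rho>] rb2 a1 b1 ag rho
    by (simp add: V1_def P_def Q_def)
  have r2: "complex_of_real \<rho> powr (\<beta> + 3) * fE \<alpha> (\<beta> + 3) (\<gamma> + 1) (\<beta> + 1) (\<i> / complex_of_real \<rho>) = Fn (\<beta> + 3) V2 \<rho>"
    using fE_repr[of "\<beta> + 3" \<alpha> "\<beta> + 1" "\<gamma> + 1" \<rho>] rb3 a1 b1 ag1 rho
    by (simp add: V2_def P'_def Q_def add_ac)
  have val: "complex_of_real \<rho> powr (\<beta> + 1) * MacRobertE [\<alpha>] [\<beta>] (\<i> / complex_of_real \<rho>)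
              * MacRobertE [\<alpha> + \<gamma>, \<beta> + 1] [\<beta>, \<beta> + 2] (- \<i> / complex_of_real \<rho>)
            - \<i> * complex_of_real \<rho> powr (\<beta> + 2) * \<beta>
              * fE \<alpha> (\<beta> + 2) \<gamma> (\<beta> + 1) (\<i> / complex_of_real \<rho>)
            - complex_of_real \<rho> powr (\<beta> + 3)
              * fE \<alpha> (\<beta> + 3) (\<gamma> + 1) (\<beta> + 1) (\<i> / complex_of_real \<rho>) = F \<rho>"
    unfolding F_def m0 m1[symmetric] r1[symmetric] r2[symmetric] by (simp add: algebra_simps)
  have der: "(F has_vector_derivative
      (complex_of_real t powr \<beta> * MacRobertE [\<alpha>] [\<beta>] (\<i> / complex_of_real t)
                 * MacRobertE [\<alpha> + \<gamma>] [\<beta>] (- \<i> / complex_of_real t))) (at t)" if t: "t \<noteq> 0" for t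
  proof -
    define z where "z = complex_of_real t"
    define tb where "tb = complex_of_real t powr \<beta>"
    define S where "S = ps (sc (\<beta> + 1) Bt) z"
    have dA: "((\<lambda>t. ps A (complex_of_real t)) has_vector_derivative ps (diffs A) (complex_of_real t)) (at t)"
      by (rule has_vector_derivative_real_field[OF ps_deriv[OF eA]])
    have d: "(F has_vector_derivative
        (ps A z * (complex_of_real t powr (\<beta> + 1 - 1) * ps Bt z) + ps (diffs A) z * Fn (\<beta> + 1) Bt t
         - \<i> * \<beta> * (complex_of_real t powr (\<beta> + 2 - 1) * ps V1 z)
         - complex_of_real t powr (\<beta> + 3 - 1) * ps V2 z)) (at t)"
      unfolding F_def z_def
      by (intro has_vector_derivative_diff has_vector_derivative_mult has_vector_derivative_mult_right
           Fn_deriv eB eV1 eV2 rb1 rb2 rb3 t dA)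
    have pw1: "complex_of_real t powr (\<beta> + 2 - 1) = tb * z"
      using powr_plus_nat[OF t, of \<beta>] by (simp add: z_def tb_def add_ac)
    have pw2: "complex_of_real t powr (\<beta> + 3 - 1) = tb * z * z"
    proof -
      have "complex_of_real t powr (\<beta> + 3 - 1) = complex_of_real t powr ((\<beta> + 1) + 1)" by (simp add: add_ac)
      also have "\<dots> = tb * z * z" unfolding powr_plus_nat[OF t] by (simp add: z_def tb_def)
      finally show ?thesis .
    qed
    have pw0: "complex_of_real t powr (\<beta> + 1 - 1) = tb" by (simp add: tb_def)
    have FnB: "Fn (\<beta> + 1) Bt t = tb * z * S"
      unfolding Fn_def S_def z_def tb_def powr_plus_nat[OF t] ..
    have dA': "ps (diffs A) z = \<i> * ps Q z"
    proof -
      have "ps (diffs A) z = ps (\<lambda>n. \<i> * Q n) z"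
        unfolding A_def Q_def by (rule ps_cong, rule coef_diffs[OF a b])
      then show ?thesis using ps_cmult[OF eQ] by simp
    qed
    have eS: "entire (sc (\<beta> + 1) Bt)" by (rule entire_sc[OF eB rb1])
    have key: "\<i> * S = (\<i> * \<beta>) * ps P z + 1 * (z * ps P' z)"
    proof -
      have "\<i> * S = ps (\<lambda>n. \<i> * sc (\<beta> + 1) Bt n) z" unfolding S_def using ps_cmult[OF eS] by simp
      also have "\<dots> = ps (\<lambda>n. (\<i> * \<beta>) * P n + 1 * shr P' n) z"
        unfolding Bt_def P_def P'_def by (rule ps_cong, rule coef1[OF ag b])
      also have "\<dots> = (\<i> * \<beta>) * ps P z + 1 * ps (shr P') z"
        by (rule ps_lin[OF eP ps_shr(2)[OF eP'], symmetric])
      also have "\<dots> = (\<i> * \<beta>) * ps P z + 1 * (z * ps P' z)"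
        using ps_shr(1)[OF eP'] by simp
      finally show ?thesis .
    qed
    have "ps A z * (complex_of_real t powr (\<beta> + 1 - 1) * ps Bt z) + ps (diffs A) z * Fn (\<beta> + 1) Bt t
         - \<i> * \<beta> * (complex_of_real t powr (\<beta> + 2 - 1) * ps V1 z)
         - complex_of_real t powr (\<beta> + 3 - 1) * ps V2 z
       = tb * ps A z * ps Bt z + tb * z * ps Q z * (\<i> * S - ((\<i> * \<beta>) * ps P z + 1 * (z * ps P' z)))"
      unfolding pw0 pw1 pw2 FnB dA' psV1 psV2 by (simp add: algebra_simps)
    also have "\<dots> = tb * ps A z * ps Bt z" unfolding key by simp
    also have "\<dots> = complex_of_real t powr \<beta> * MacRobertE [\<alpha>] [\<beta>] (\<i> / complex_of_real t)
                 * MacRobertE [\<alpha> + \<gamma>] [\<beta>] (- \<i> / complex_of_real t)"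
      unfolding integrand_eq[OF a b ag] A_def Bt_def z_def tb_def by (simp add: algebra_simps)
    finally show ?thesis using d by simp
  qed
  have F0: "F 0 = 0" unfolding F_def by (simp add: Fn_0)
  have Flim: "(F \<longlongrightarrow> 0) (at 0)"
  proof -
    have c: "((\<lambda>t. ps A (complex_of_real t)) \<longlongrightarrow> ps A (complex_of_real 0)) (at (0::real))"
      by (rule isCont_tendsto_compose[OF ps_isCont[OF eA]]) (auto intro!: tendsto_eq_intros)
    have "(F \<longlongrightarrow> ps A (complex_of_real 0) * 0 - \<i> * \<beta> * 0 - 0) (at 0)"
      unfolding F_def by (intro tendsto_diff tendsto_mult c tendsto_const Fn_lim eB eV1 eV2 rb1 rb2 rb3)
    then show ?thesis by simp
  qed
  show ?thesis unfolding val by (rule ftc_ointegral[OF F0 Flim der])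
qed


theorem mainTheorem9:
  fixes \<alpha> \<beta> \<gamma> :: complex and \<rho> :: real
  assumes "Re \<beta> > -1"
    and "\<beta> \<notin> \<int>\<^sub>\<le>\<^sub>0"
    and "\<alpha> \<notin> \<int>\<^sub>\<le>\<^sub>0"
    and "\<alpha> + \<gamma> \<notin> \<int>\<^sub>\<le>\<^sub>0"
    and "\<rho> \<noteq> 0"
  shows "has_ointegral
           (\<lambda>t. complex_of_real t powr \<beta> * MacRobertE [\<alpha>] [\<beta>] (\<i> / complex_of_real t)
                 * MacRobertE [\<alpha> + \<gamma>] [\<beta>] (- \<i> / complex_of_real t))
           (complex_of_real \<rho> powr (\<beta> + 1) * MacRobertE [\<alpha>] [\<beta>] (\<i> / complex_of_real \<rho>)
              * MacRobertE [\<alpha> + \<gamma>, \<beta> + 1] [\<beta>, \<beta> + 2] (- \<i> / complex_of_real \<rho>)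
            - \<i> * complex_of_real \<rho> powr (\<beta> + 2) * \<beta>
              * fE \<alpha> (\<beta> + 2) \<gamma> (\<beta> + 1) (\<i> / complex_of_real \<rho>)
            - complex_of_real \<rho> powr (\<beta> + 3)
              * fE \<alpha> (\<beta> + 3) (\<gamma> + 1) (\<beta> + 1) (\<i> / complex_of_real \<rho>))
           0 \<rho>
       \<and> has_ointegral
           (\<lambda>t. complex_of_real t powr \<beta> * MacRobertE [\<alpha>] [\<beta>] (\<i> / complex_of_real t)
                 * MacRobertE [\<alpha> + \<gamma>] [\<beta>] (- \<i> / complex_of_real t))
           (complex_of_real \<rho> powr (\<beta> + 1)
              * (\<beta> * fE (\<alpha> - 1) (\<beta> + 1) (\<gamma> + 1) \<beta> (\<i> / complex_of_real \<rho>)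
                 - \<i> * complex_of_real \<rho> * fE (\<alpha> - 1) (\<beta> + 2) (\<gamma> + 2) \<beta> (\<i> / complex_of_real \<rho>)))
           0 \<rho>"
  using form1[OF assms] form2[OF assms] by blast

end
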